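(* Let $\mathcal{X}$ be a $d$-dimensional manifold with volume form $V$, $G$ a probability measure on $\mathcal{X}$ with density $g$ w.r.t. $V$, $\mathcal{Y}\subset\mathbb{R}$ with measure $\mu$ (Lebesgue or counting), and $\nu=V\times\mu$. For a latent function $f:\mathcal{X}\to\mathbb{R}$ let $\pi_f(x,y)=\pi_f(y\mid x)g(x)$, where $\pi_f(y\mid x)=h(y)\exp\{\theta(x)\kappa(y)-J(\theta(x))\}$ is a one-parameter canonical exponential family with $\theta=\zeta\circ f$. Assume $J\in C^2(\mathbb{R})$, the family is minimal with $J'$ invertible, $\varphi=J'\circ\theta=l\circ f$ for a link function $l$, $\zeta=(J')^{-1}\circ l$, and $l,\zeta$ are continuously differentiable with uniformly bounded derivatives. Then: 1. If $f_1,f_2$ take values in a bounded set $\Omega\subset\mathbb{R}$, there exist positive constants $C_4(\Omega),C_5(\Omega)$ such that $\mathrm{KL}(\pi_{f_1};\pi_{f_2})\le C_4(\Omega)\|f_1-f_2\|_\infty^2$ and $V_{2,0}(\pi_{f_1};\pi_{f_2})\le C_5(\Omega)\|f_1-f_2\|_\infty^2$. 2. There exists a uniform constant $C_6$ such that $d_H^2(\pi_{f_1},\pi_{f_2})\le C_6\|f_1-f_2\|_\infty^2$.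
   Context: $h\ge0$, $\kappa$ are functions of $y$ and $J(\theta)=\log\int_{\mathcal{Y}}h(y)e^{\theta\kappa(y)}d\mu(y)$. $\mathrm{KL}(\pi_{f_1};\pi_{f_2})=\mathbb{E}_{\pi_{f_1}}\log(\pi_{f_1}/\pi_{f_2})$; $V_{2,0}(\pi_{f_1};\pi_{f_2})=\mathbb{E}_{\pi_{f_1}}|\log(\pi_{f_1}/\pi_{f_2})-\mathrm{KL}(\pi_{f_1};\pi_{f_2})|^2$; $d_H(\pi_{f_1},\pi_{f_2})=\{\int(\sqrt{\pi_{f_1}}-\sqrt{\pi_{f_2}})^2d\nu\}^{1/2}$; $\|f\|_\infty=\sup_x|f(x)|$. *)

theory Defs
  imports "HOL-Probability.Probability"
begin

definition logpart :: "real measure \<Rightarrow> (real \<Rightarrow> real) \<Rightarrow> (real \<Rightarrow> real) \<Rightarrow> real \<Rightarrow> real" where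
  "logpart \<mu> h \<kappa> \<theta> = ln (\<integral>y. h y * exp (\<theta> * \<kappa> y) \<partial>\<mu>)"

definition cdens :: "real measure \<Rightarrow> (real \<Rightarrow> real) \<Rightarrow> (real \<Rightarrow> real) \<Rightarrow> real \<Rightarrow> real \<Rightarrow> real" where
  "cdens \<mu> h \<kappa> \<theta> y = h y * exp (\<theta> * \<kappa> y - logpart \<mu> h \<kappa> \<theta>)"

definition jdens ::
  "real measure \<Rightarrow> (real \<Rightarrow> real) \<Rightarrow> (real \<Rightarrow> real) \<Rightarrow> (real \<Rightarrow> real) \<Rightarrow> ('a \<Rightarrow> real)
   \<Rightarrow> ('a \<Rightarrow> real) \<Rightarrow> 'a \<times> real \<Rightarrow> real" where
  "jdens \<mu> h \<kappa> \<zeta> g f z = cdens \<mu> h \<kappa> (\<zeta> (f (fst z))) (snd z) * g (fst z)"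

definition KL :: "'b measure \<Rightarrow> ('b \<Rightarrow> real) \<Rightarrow> ('b \<Rightarrow> real) \<Rightarrow> real" where
  "KL \<nu> p1 p2 = (\<integral>z. p1 z * ln (p1 z / p2 z) \<partial>\<nu>)"

definition V20 :: "'b measure \<Rightarrow> ('b \<Rightarrow> real) \<Rightarrow> ('b \<Rightarrow> real) \<Rightarrow> real" where
  "V20 \<nu> p1 p2 = (\<integral>z. p1 z * \<bar>ln (p1 z / p2 z) - KL \<nu> p1 p2\<bar>^2 \<partial>\<nu>)"

definition hellinger :: "'b measure \<Rightarrow> ('b \<Rightarrow> real) \<Rightarrow> ('b \<Rightarrow> real) \<Rightarrow> real" where
  "hellinger \<nu> p1 p2 = sqrt (\<integral>z. (sqrt (p1 z) - sqrt (p2 z))^2 \<partial>\<nu>)"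

definition supnorm :: "'a measure \<Rightarrow> ('a \<Rightarrow> real) \<Rightarrow> real" where
  "supnorm V f = (SUP x\<in>space V. \<bar>f x\<bar>)"

definition minimal_family :: "real measure \<Rightarrow> (real \<Rightarrow> real) \<Rightarrow> (real \<Rightarrow> real) \<Rightarrow> bool" where
  "minimal_family \<mu> h \<kappa> \<longleftrightarrow> \<not> (\<exists>c. AE y in \<mu>. h y \<noteq> 0 \<longrightarrow> \<kappa> y = c)"

end

theory Submission
  imports Defs
begin


lemma mvt_any:
  fixes f :: "real \<Rightarrow> real"
  assumes "\<forall>t. f differentiable at t"
  shows "\<exists>z. min a b \<le> z \<and> z \<le> max a b \<and> f b - f a = (b - a) * deriv f z"
proof -
  have D: "\<And>x. DERIV f x :> deriv f x" using assms by (simp add: DERIV_deriv_iff_real_differentiable)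
  consider "a < b" | "a = b" | "b < a" by linarith
  then show ?thesis
  proof cases
    case 1 then obtain z where "a < z" "z < b" "f b - f a = (b - a) * deriv f z"
      using MVT2[OF 1, of f "deriv f"] D by blast
    then show ?thesis using 1 by (intro exI[of _ z]) auto
  next
    case 2 then show ?thesis by (intro exI[of _ a]) auto
  next
    case 3 then obtain z where "b < z" "z < a" "f a - f b = (a - b) * deriv f z"
      using MVT2[OF 3, of f "deriv f"] D by blast
    then show ?thesis using 3 by (intro exI[of _ z]) (auto simp: algebra_simps)
  qed
qed

lemma lip_deriv:
  fixes f :: "real \<Rightarrow> real"
  assumes "\<forall>t. f differentiable at t"
    and "\<And>t. min a b \<le> t \<Longrightarrow> t \<le> max a b \<Longrightarrow> \<bar>deriv f t\<bar> \<le> B"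
  shows "\<bar>f a - f b\<bar> \<le> B * \<bar>a - b\<bar>"
proof -
  obtain z where z: "min a b \<le> z" "z \<le> max a b" "f b - f a = (b - a) * deriv f z"
    using mvt_any[OF assms(1)] by blast
  have "\<bar>f a - f b\<bar> = \<bar>a - b\<bar> * \<bar>deriv f z\<bar>" using z(3)
    by (metis abs_minus_commute abs_mult)
  also have "\<dots> \<le> \<bar>a - b\<bar> * B" using assms(2)[OF z(1,2)] by (simp add: mult_left_mono)
  finally show ?thesis by (simp add: mult.commute)
qed

lemma D_bound:
  fixes J :: "real \<Rightarrow> real"
  assumes d1: "\<forall>t. J differentiable at t" and d2: "\<forall>t. deriv J differentiable at t"
    and inj: "inj (deriv J)"
  shows "(J a + J b) / 2 - J ((a + b) / 2) \<le> \<bar>a - b\<bar> * \<bar>deriv J a - deriv J b\<bar> / 4"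
proof -
  have cont: "continuous_on S (deriv J)" for S
    using d2 by (meson differentiable_imp_continuous_on differentiable_at_imp_differentiable_on)
  have main: "(J a + J b) / 2 - J ((a + b) / 2) \<le> \<bar>a - b\<bar> * \<bar>deriv J a - deriv J b\<bar> / 4"
    if ab: "a < b" for a b
  proof -
    define m where "m = (a + b) / 2"
    have am: "a < m" "m < b" using ab by (auto simp: m_def)
    obtain z1 where z1: "a \<le> z1" "z1 \<le> m" "J m - J a = (m - a) * deriv J z1"
      using mvt_any[OF d1, of a m] am by auto
    obtain z2 where z2: "m \<le> z2" "z2 \<le> b" "J b - J m = (b - m) * deriv J z2"
      using mvt_any[OF d1, of m b] am by auto
    have bet: "min (deriv J a) (deriv J b) \<le> deriv J z \<and> deriv J z \<le> max (deriv J a) (deriv J b)"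
      if "a \<le> z" "z \<le> b" for z
    proof (cases "a < z \<and> z < b")
      case True
      then show ?thesis using continuous_inj_imp_mono[of a z b "deriv J"] cont inj_on_subset[OF inj]
        by force
    next
      case False then have "z = a \<or> z = b" using that by auto
      then show ?thesis by auto
    qed
    have "(J a + J b) / 2 - J m = ((J b - J m) - (J m - J a)) / 2" by simp
    also have "\<dots> = (b - a) / 4 * (deriv J z2 - deriv J z1)"
    proof -
      have e: "m - a = (b - a) / 2" "b - m = (b - a) / 2" by (auto simp: m_def field_simps)
      show ?thesis using z1(3) z2(3) unfolding e by (simp add: field_simps)
    qed
    also have "\<dots> \<le> (b - a) / 4 * \<bar>deriv J a - deriv J b\<bar>"
      using bet[of z1] bet[of z2] z1 z2 am ab
      by (intro mult_left_mono) (auto simp: abs_if min_def max_def split: if_splits)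
    finally show ?thesis using ab by (simp add: m_def)
  qed
  consider "a < b" | "a = b" | "b < a" by linarith
  then show ?thesis
  proof cases
    case 1 then show ?thesis using main by blast
  next
    case 2 then show ?thesis by simp
  next
    case 3 then show ?thesis using main[OF 3]
      by (simp add: add.commute abs_minus_commute)
  qed
qed

lemma E_bound:
  fixes J :: "real \<Rightarrow> real"
  assumes d1: "\<forall>t. J differentiable at t" and d2: "\<forall>t. deriv J differentiable at t"
    and M2: "\<And>t. a - \<bar>a - b\<bar> \<le> t \<Longrightarrow> t \<le> a + \<bar>a - b\<bar> \<Longrightarrow> \<bar>deriv (deriv J) t\<bar> \<le> M2"
  shows "\<bar>J (2 * a - b) - 2 * J a + J b\<bar> \<le> 2 * M2 * (a - b)^2"
proof -
  define d where "d = a - b"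
  obtain z1 where z1: "min a (a + d) \<le> z1" "z1 \<le> max a (a + d)" "J (a + d) - J a = d * deriv J z1"
    using mvt_any[OF d1, of a "a + d"] by auto
  obtain z2 where z2: "min b a \<le> z2" "z2 \<le> max b a" "J a - J b = d * deriv J z2"
    using mvt_any[OF d1, of b a] by (auto simp: d_def)
  have "\<bar>deriv J z1 - deriv J z2\<bar> \<le> M2 * \<bar>z1 - z2\<bar>"
    using z1 z2 by (intro lip_deriv[OF d2] M2) (auto simp: d_def abs_if min_def max_def split: if_splits)
  also have "\<dots> \<le> M2 * (2 * \<bar>d\<bar>)"
  proof -
    have "M2 \<ge> 0" using M2[of a] by (auto intro: order_trans[OF abs_ge_zero])
    moreover have "\<bar>z1 - z2\<bar> \<le> 2 * \<bar>d\<bar>" using z1 z2 by (auto simp: d_def abs_if min_def max_def split: if_splits)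
    ultimately show ?thesis by (intro mult_left_mono)
  qed
  finally have *: "\<bar>deriv J z1 - deriv J z2\<bar> \<le> M2 * (2 * \<bar>d\<bar>)" .
  have "J (2 * a - b) - 2 * J a + J b = d * (deriv J z1 - deriv J z2)"
    using z1(3) z2(3) by (simp add: d_def algebra_simps)
  then have "\<bar>J (2 * a - b) - 2 * J a + J b\<bar> = \<bar>d\<bar> * \<bar>deriv J z1 - deriv J z2\<bar>" by (simp add: abs_mult)
  also have "\<dots> \<le> \<bar>d\<bar> * (M2 * (2 * \<bar>d\<bar>))" by (intro mult_left_mono *) auto
  also have "\<dots> = 2 * M2 * d^2" by (simp add: power2_eq_square abs_mult_self_eq algebra_simps)
  finally show ?thesis by (simp add: d_def)
qed




lemma sq_le_exp: "(x::real)^2 \<le> 4 * (exp x + exp (-x))"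
proof -
  have "\<bar>x\<bar>/2 \<le> exp (\<bar>x\<bar>/2)" using exp_ge_add_one_self[of "\<bar>x\<bar>/2"] by linarith
  then have "(\<bar>x\<bar>/2)^2 \<le> (exp (\<bar>x\<bar>/2))^2" by (intro power_mono) auto
  also have "(exp (\<bar>x\<bar>/2))^2 = exp \<bar>x\<bar>" by (simp add: power2_eq_square flip: exp_add)
  finally have "x^2 \<le> 4 * exp \<bar>x\<bar>" by (simp add: power_divide)
  also have "exp \<bar>x\<bar> \<le> exp x + exp (-x)" by (cases "x \<ge> 0") auto
  finally show ?thesis by simp
qed

lemma sq3: "((u::real) + v + w)^2 \<le> 3 * (u^2 + v^2 + w^2)"
proof -
  have h: "0 \<le> (u-v)^2 + (v-w)^2 + (u-w)^2" by simp
  have "3 * (u^2 + v^2 + w^2) - (u + v + w)^2 = (u-v)^2 + (v-w)^2 + (u-w)^2"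
    by (simp add: power2_eq_square algebra_simps)
  then show ?thesis using h by linarith
qed

lemma abs_le_exp: "\<bar>x::real\<bar> \<le> exp x + exp (-x)"
proof -
  have "\<bar>x\<bar> \<le> exp \<bar>x\<bar>" using exp_ge_add_one_self[of "\<bar>x\<bar>"] by linarith
  also have "exp \<bar>x\<bar> \<le> exp x + exp (-x)" by (cases "x \<ge> 0") auto
  finally show ?thesis .
qed

locale cond =
  fixes \<mu> :: "real measure" and h \<kappa> :: "real \<Rightarrow> real"
  assumes h_meas: "h \<in> borel_measurable \<mu>" and h_nonneg: "\<forall>y. h y \<ge> 0"
    and kappa_meas: "\<kappa> \<in> borel_measurable \<mu>"
    and J_finite: "\<forall>\<theta>. integrable \<mu> (\<lambda>y. h y * exp (\<theta> * \<kappa> y)) \<and> (\<integral>y. h y * exp (\<theta> * \<kappa> y) \<partial>\<mu>) > 0"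
begin

abbreviation "JJ \<equiv> logpart \<mu> h \<kappa>"
abbreviation "cd \<equiv> cdens \<mu> h \<kappa>"
definition "WW a = (exp (JJ (a + 1)) + exp (JJ (a - 1))) / exp (JJ a)"

lemma Z_eq: "(\<integral>y. h y * exp (\<theta> * \<kappa> y) \<partial>\<mu>) = exp (JJ \<theta>)"
  using J_finite by (simp add: logpart_def)

lemma Z_int: "integrable \<mu> (\<lambda>y. h y * exp (\<theta> * \<kappa> y))"
  using J_finite by simp

lemma cd_exp: "cd \<theta> y = h y * exp (\<theta> * \<kappa> y) / exp (JJ \<theta>)"
  by (simp add: cdens_def exp_diff)

lemma cd_nonneg: "cd \<theta> y \<ge> 0"
  using h_nonneg by (simp add: cdens_def)

lemma cd_meas[measurable]: "cd \<theta> \<in> borel_measurable \<mu>"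
  unfolding cdens_def using h_meas kappa_meas by measurable

lemma cd_int: "integrable \<mu> (cd \<theta>)" and cd_integral: "(\<integral>y. cd \<theta> y \<partial>\<mu>) = 1"
proof -
  have e: "cd \<theta> = (\<lambda>y. h y * exp (\<theta> * \<kappa> y) / exp (JJ \<theta>))" by (simp add: cd_exp fun_eq_iff)
  show "integrable \<mu> (cd \<theta>)" unfolding e by (intro integrable_divide Z_int)
  show "(\<integral>y. cd \<theta> y \<partial>\<mu>) = 1" unfolding e by (simp add: Z_eq)
qed

lemma cd_shift: "cd a y * exp (c * \<kappa> y) = cd (a + c) y * (exp (JJ (a + c)) / exp (JJ a))"
  by (simp add: cd_exp field_simps flip: exp_add)

lemma W_int: "integrable \<mu> (\<lambda>y. cd a y * (exp (\<kappa> y) + exp (- \<kappa> y)))"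
  and W_integral: "(\<integral>y. cd a y * (exp (\<kappa> y) + exp (- \<kappa> y)) \<partial>\<mu>) = WW a"
proof -
  have e: "(\<lambda>y. cd a y * (exp (\<kappa> y) + exp (- \<kappa> y))) =
     (\<lambda>y. cd (a + 1) y * (exp (JJ (a + 1)) / exp (JJ a)) + cd (a - 1) y * (exp (JJ (a - 1)) / exp (JJ a)))"
  proof -
    have "cd a y * exp (\<kappa> y) = cd (a + 1) y * (exp (JJ (a + 1)) / exp (JJ a))" for y
      using cd_shift[where a=a and c=1 and y=y] by simp
    moreover have "cd a y * exp (- \<kappa> y) = cd (a - 1) y * (exp (JJ (a - 1)) / exp (JJ a))" for y
      using cd_shift[where a=a and c="-1" and y=y] by simp
    ultimately show ?thesis by (simp add: fun_eq_iff distrib_left)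
  qed
  show "integrable \<mu> (\<lambda>y. cd a y * (exp (\<kappa> y) + exp (- \<kappa> y)))" unfolding e
    using cd_int by auto
  show "(\<integral>y. cd a y * (exp (\<kappa> y) + exp (- \<kappa> y)) \<partial>\<mu>) = WW a" unfolding e
    by (simp add: cd_int cd_integral WW_def add_divide_distrib)
qed


lemma sqrt_prod_cd:
  "sqrt (cd a y) * sqrt (cd b y) =
     cd ((a + b) / 2) y * exp (- ((JJ a + JJ b) / 2 - JJ ((a + b) / 2)))"
proof -
  define m where "m = (a + b) / 2"
  define D where "D = (JJ a + JJ b) / 2 - JJ m"
  have "exp (a * \<kappa> y - JJ a) * exp (b * \<kappa> y - JJ b) = (exp (m * \<kappa> y - JJ m) * exp (- D))^2"
  proof -
    have "a * \<kappa> y - JJ a + (b * \<kappa> y - JJ b) = (m * \<kappa> y - JJ m + - D) + (m * \<kappa> y - JJ m + - D)"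
      by (simp add: m_def D_def field_simps)
    then show ?thesis by (simp add: power2_eq_square flip: exp_add)
  qed
  then have "cd a y * cd b y = (cd m y * exp (- D))^2"
    by (simp add: cdens_def power2_eq_square algebra_simps)
  then have "sqrt (cd a y * cd b y) = cd m y * exp (- D)"
    using cd_nonneg[of m y] by simp
  then show ?thesis by (simp add: real_sqrt_mult m_def D_def)
qed

lemma hell_cond:
  shows "integrable \<mu> (\<lambda>y. (sqrt (cd a y) - sqrt (cd b y))^2)"
    and "(\<integral>y. (sqrt (cd a y) - sqrt (cd b y))^2 \<partial>\<mu>) \<le> 2 * ((JJ a + JJ b) / 2 - JJ ((a + b) / 2))"
proof -
  define D where "D = (JJ a + JJ b) / 2 - JJ ((a + b) / 2)"
  have e: "(\<lambda>y. (sqrt (cd a y) - sqrt (cd b y))^2) =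
    (\<lambda>y. cd a y + cd b y - 2 * exp (- D) * cd ((a + b) / 2) y)"
  proof
    fix y
    have "(sqrt (cd a y) - sqrt (cd b y))^2 = (sqrt (cd a y))^2 + (sqrt (cd b y))^2 - 2 * (sqrt (cd a y) * sqrt (cd b y))"
      by (simp add: power2_eq_square algebra_simps)
    also have "\<dots> = cd a y + cd b y - 2 * exp (- D) * cd ((a + b) / 2) y"
      using cd_nonneg[of a y] cd_nonneg[of b y] by (simp add: sqrt_prod_cd D_def)
    finally show "(sqrt (cd a y) - sqrt (cd b y))^2 = cd a y + cd b y - 2 * exp (- D) * cd ((a + b) / 2) y" .
  qed
  show "integrable \<mu> (\<lambda>y. (sqrt (cd a y) - sqrt (cd b y))^2)" unfolding e
    using cd_int by auto
  have "(\<integral>y. (sqrt (cd a y) - sqrt (cd b y))^2 \<partial>\<mu>) = 2 - 2 * exp (- D)" unfolding e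
    using cd_int by (simp add: cd_integral)
  also have "\<dots> \<le> 2 * D" using exp_ge_add_one_self[of "- D"] by simp
  finally show "(\<integral>y. (sqrt (cd a y) - sqrt (cd b y))^2 \<partial>\<mu>) \<le> 2 * ((JJ a + JJ b) / 2 - JJ ((a + b) / 2))"
    by (simp add: D_def)
qed

definition "Lc a b y = (a - b) * \<kappa> y - (JJ a - JJ b)"

lemma Lc_meas[measurable]: "Lc a b \<in> borel_measurable \<mu>"
  unfolding Lc_def using kappa_meas by measurable

lemma kl_cond:
  shows "integrable \<mu> (\<lambda>y. cd a y * exp (Lc a b y))"
    and "(\<integral>y. cd a y * exp (Lc a b y) \<partial>\<mu>) = exp (JJ (2 * a - b) - 2 * JJ a + JJ b)"
proof -
  have e: "(\<lambda>y. cd a y * exp (Lc a b y)) = (\<lambda>y. cd (2 * a - b) y * exp (JJ (2 * a - b) - 2 * JJ a + JJ b))"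
  proof
    fix y
    have "a * \<kappa> y - JJ a + ((a - b) * \<kappa> y - (JJ a - JJ b)) =
       (2 * a - b) * \<kappa> y - JJ (2 * a - b) + (JJ (2 * a - b) - 2 * JJ a + JJ b)"
      by (simp add: algebra_simps)
    then show "cd a y * exp (Lc a b y) = cd (2 * a - b) y * exp (JJ (2 * a - b) - 2 * JJ a + JJ b)"
      by (simp add: cdens_def Lc_def mult.assoc flip: exp_add)
  qed
  show "integrable \<mu> (\<lambda>y. cd a y * exp (Lc a b y))" unfolding e using cd_int by auto
  show "(\<integral>y. cd a y * exp (Lc a b y) \<partial>\<mu>) = exp (JJ (2 * a - b) - 2 * JJ a + JJ b)"
    unfolding e by (simp add: cd_integral)
qed

lemma abs_cond:
  shows "integrable \<mu> (\<lambda>y. cd a y * \<bar>Lc a b y\<bar>)"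
    and "(\<integral>y. cd a y * \<bar>Lc a b y\<bar> \<partial>\<mu>) \<le> \<bar>a - b\<bar> * WW a + \<bar>JJ a - JJ b\<bar>"
proof -
  let ?F = "\<lambda>y. \<bar>a - b\<bar> * (cd a y * (exp (\<kappa> y) + exp (- \<kappa> y))) + \<bar>JJ a - JJ b\<bar> * cd a y"
  have intF: "integrable \<mu> ?F" using W_int cd_int by auto
  have le: "cd a y * \<bar>Lc a b y\<bar> \<le> ?F y" for y
  proof -
    have "\<bar>Lc a b y\<bar> \<le> \<bar>a - b\<bar> * \<bar>\<kappa> y\<bar> + \<bar>JJ a - JJ b\<bar>"
      unfolding Lc_def by (metis abs_mult abs_triangle_ineq4)
    also have "\<dots> \<le> \<bar>a - b\<bar> * (exp (\<kappa> y) + exp (- \<kappa> y)) + \<bar>JJ a - JJ b\<bar>"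
      by (intro add_right_mono mult_left_mono abs_le_exp) auto
    finally have "\<bar>Lc a b y\<bar> \<le> \<bar>a - b\<bar> * (exp (\<kappa> y) + exp (- \<kappa> y)) + \<bar>JJ a - JJ b\<bar>" .
    then have "cd a y * \<bar>Lc a b y\<bar> \<le> cd a y * (\<bar>a - b\<bar> * (exp (\<kappa> y) + exp (- \<kappa> y)) + \<bar>JJ a - JJ b\<bar>)"
      by (rule mult_left_mono) (rule cd_nonneg)
    then show ?thesis by (simp add: algebra_simps)
  qed
  show int: "integrable \<mu> (\<lambda>y. cd a y * \<bar>Lc a b y\<bar>)"
    by (rule Bochner_Integration.integrable_bound[OF intF]) (use le cd_nonneg in \<open>auto intro!: AE_I2 order_trans[OF _ abs_ge_self]\<close>)
  have "(\<integral>y. cd a y * \<bar>Lc a b y\<bar> \<partial>\<mu>) \<le> (\<integral>y. ?F y \<partial>\<mu>)"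
    by (intro integral_mono int intF le)
  also have "\<dots> = \<bar>a - b\<bar> * WW a + \<bar>JJ a - JJ b\<bar>"
    using W_int cd_int by (simp add: W_integral cd_integral)
  finally show "(\<integral>y. cd a y * \<bar>Lc a b y\<bar> \<partial>\<mu>) \<le> \<bar>a - b\<bar> * WW a + \<bar>JJ a - JJ b\<bar>" .
qed

lemma sq_cond:
  shows "integrable \<mu> (\<lambda>y. cd a y * \<bar>Lc a b y - K\<bar>^2)"
    and "(\<integral>y. cd a y * \<bar>Lc a b y - K\<bar>^2 \<partial>\<mu>) \<le> 3 * (4 * (a - b)^2 * WW a + (JJ a - JJ b)^2 + K^2)"
proof -
  let ?F = "\<lambda>y. 3 * (4 * (a - b)^2 * (cd a y * (exp (\<kappa> y) + exp (- \<kappa> y))) + ((JJ a - JJ b)^2 + K^2) * cd a y)"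
  have intF: "integrable \<mu> ?F" using W_int cd_int by auto
  have le: "cd a y * \<bar>Lc a b y - K\<bar>^2 \<le> ?F y" for y
  proof -
    have "\<bar>Lc a b y - K\<bar>^2 = ((a - b) * \<kappa> y + (- (JJ a - JJ b)) + (- K))^2" by (simp add: Lc_def algebra_simps)
    also have "\<dots> \<le> 3 * (((a - b) * \<kappa> y)^2 + (JJ a - JJ b)^2 + K^2)"
    proof -
      have "\<And>u v w::real. (u + v + w)^2 \<le> 3 * (u^2 + v^2 + w^2)"
        by (rule sq3)
      then show ?thesis by (metis power2_minus)
    qed
    also have "\<dots> \<le> 3 * (4 * (a - b)^2 * (exp (\<kappa> y) + exp (- \<kappa> y)) + (JJ a - JJ b)^2 + K^2)"
    proof -
      have "((a - b) * \<kappa> y)^2 = (a - b)^2 * (\<kappa> y)^2" by (simp add: power_mult_distrib)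
      also have "\<dots> \<le> (a - b)^2 * (4 * (exp (\<kappa> y) + exp (- \<kappa> y)))"
        by (intro mult_left_mono sq_le_exp) auto
      also have "\<dots> = 4 * (a - b)^2 * (exp (\<kappa> y) + exp (- \<kappa> y))" by simp
      finally have X: "((a - b) * \<kappa> y)^2 \<le> 4 * (a - b)^2 * (exp (\<kappa> y) + exp (- \<kappa> y))" .
      show ?thesis by (rule mult_left_mono[OF add_right_mono[OF add_right_mono[OF X]]]) simp
    qed
    finally have "\<bar>Lc a b y - K\<bar>^2 \<le> 3 * (4 * (a - b)^2 * (exp (\<kappa> y) + exp (- \<kappa> y)) + (JJ a - JJ b)^2 + K^2)" .
    then have "cd a y * \<bar>Lc a b y - K\<bar>^2 \<le> cd a y * (3 * (4 * (a - b)^2 * (exp (\<kappa> y) + exp (- \<kappa> y)) + (JJ a - JJ b)^2 + K^2))"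
      by (rule mult_left_mono) (rule cd_nonneg)
    then show ?thesis by (simp add: algebra_simps)
  qed
  show int: "integrable \<mu> (\<lambda>y. cd a y * \<bar>Lc a b y - K\<bar>^2)"
    by (rule Bochner_Integration.integrable_bound[OF intF]) (use le cd_nonneg in \<open>auto intro!: AE_I2 order_trans[OF _ abs_ge_self]\<close>)
  have "(\<integral>y. cd a y * \<bar>Lc a b y - K\<bar>^2 \<partial>\<mu>) \<le> (\<integral>y. ?F y \<partial>\<mu>)"
    by (intro integral_mono int intF le)
  also have "\<dots> = 3 * (4 * (a - b)^2 * WW a + (JJ a - JJ b)^2 + K^2)"
    using W_int cd_int by (simp add: W_integral cd_integral)
  finally show "(\<integral>y. cd a y * \<bar>Lc a b y - K\<bar>^2 \<partial>\<mu>) \<le> 3 * (4 * (a - b)^2 * WW a + (JJ a - JJ b)^2 + K^2)" .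
qed


lemma ln_ratio: assumes "h y > 0" shows "ln (cd a y / cd b y) = Lc a b y"
proof -
  have "cd a y / cd b y = exp (Lc a b y)"
    using assms by (simp add: cdens_def Lc_def field_simps flip: exp_add exp_diff)
  then show ?thesis by simp
qed

lemma kl_pt: assumes "gx \<ge> 0"
  shows "cd a y * gx * ln (cd a y * gx / (cd b y * gx)) = gx * (cd a y * Lc a b y)"
proof (cases "gx > 0 \<and> h y > 0")
  case True
  then show ?thesis using ln_ratio[of y a b] by simp
next
  case False
  then have "gx = 0 \<or> h y = 0" using assms h_nonneg[rule_format, of y] by auto
  then show ?thesis by (auto simp: cdens_def)
qed

lemma v_pt: assumes "gx \<ge> 0"
  shows "cd a y * gx * \<bar>ln (cd a y * gx / (cd b y * gx)) - K\<bar>^2 = gx * (cd a y * \<bar>Lc a b y - K\<bar>^2)"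
proof (cases "gx > 0 \<and> h y > 0")
  case True
  then show ?thesis using ln_ratio[of y a b] by simp
next
  case False
  then have "gx = 0 \<or> h y = 0" using assms h_nonneg[rule_format, of y] by auto
  then show ?thesis by (auto simp: cdens_def)
qed

lemma hell_pt: assumes "gx \<ge> 0"
  shows "(sqrt (cd a y * gx) - sqrt (cd b y * gx))^2 = gx * (sqrt (cd a y) - sqrt (cd b y))^2"
proof -
  have "(sqrt (cd a y * gx) - sqrt (cd b y * gx))^2 = (sqrt gx * (sqrt (cd a y) - sqrt (cd b y)))^2"
    by (simp add: real_sqrt_mult right_diff_distrib mult.commute)
  also have "\<dots> = (sqrt gx)^2 * (sqrt (cd a y) - sqrt (cd b y))^2" by (rule power_mult_distrib)
  finally have "(sqrt (cd a y * gx) - sqrt (cd b y * gx))^2 = (sqrt gx)^2 * (sqrt (cd a y) - sqrt (cd b y))^2" .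
  then show ?thesis using assms by simp
qed

end



lemma prod_nn:
  fixes V :: "'a measure" and \<mu> :: "real measure"
  assumes sf: "sigma_finite_measure \<mu>"
    and g_nonneg: "\<forall>x\<in>space V. g x \<ge> 0"
    and F_meas: "F \<in> borel_measurable (V \<Otimes>\<^sub>M \<mu>)"
    and F_eq: "\<And>x y. x \<in> space V \<Longrightarrow> y \<in> space \<mu> \<Longrightarrow> F (x,y) = g x * u x y"
    and u_nn: "\<And>x y. x \<in> space V \<Longrightarrow> y \<in> space \<mu> \<Longrightarrow> u x y \<ge> 0"
    and u_int: "\<And>x. x \<in> space V \<Longrightarrow> integrable \<mu> (u x)"
  shows "(\<integral>\<^sup>+z. ennreal (F z) \<partial>(V \<Otimes>\<^sub>M \<mu>)) = (\<integral>\<^sup>+x. ennreal (g x) * ennreal (\<integral>y. u x y \<partial>\<mu>) \<partial>V)"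
proof -
  have "(\<integral>\<^sup>+z. ennreal (F z) \<partial>(V \<Otimes>\<^sub>M \<mu>)) = (\<integral>\<^sup>+x. \<integral>\<^sup>+y. ennreal (F (x,y)) \<partial>\<mu> \<partial>V)"
    by (rule sigma_finite_measure.nn_integral_fst[OF sf, symmetric]) (use F_meas in measurable)
  also have "\<dots> = (\<integral>\<^sup>+x. ennreal (g x) * ennreal (\<integral>y. u x y \<partial>\<mu>) \<partial>V)"
  proof (rule nn_integral_cong)
    fix x assume x: "x \<in> space V"
    have "(\<integral>\<^sup>+y. ennreal (F (x,y)) \<partial>\<mu>) = (\<integral>\<^sup>+y. ennreal (g x) * ennreal (u x y) \<partial>\<mu>)"
      by (intro nn_integral_cong) (simp add: F_eq x ennreal_mult g_nonneg u_nn)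
    also have "\<dots> = ennreal (g x) * (\<integral>\<^sup>+y. ennreal (u x y) \<partial>\<mu>)"
      by (rule nn_integral_cmult) (use u_int[OF x] in auto)
    also have "(\<integral>\<^sup>+y. ennreal (u x y) \<partial>\<mu>) = ennreal (\<integral>y. u x y \<partial>\<mu>)"
      by (rule nn_integral_eq_integral[OF u_int[OF x]]) (auto intro!: AE_I2 u_nn x)
    finally show "(\<integral>\<^sup>+y. ennreal (F (x,y)) \<partial>\<mu>) = ennreal (g x) * ennreal (\<integral>y. u x y \<partial>\<mu>)" .
  qed
  finally show ?thesis .
qed

lemma prod_bound:
  fixes V :: "'a measure" and \<mu> :: "real measure"
  assumes sf: "sigma_finite_measure \<mu>"
    and g_meas: "g \<in> borel_measurable V"
    and g_nonneg: "\<forall>x\<in>space V. g x \<ge> 0"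
    and G1: "(\<integral>\<^sup>+x. ennreal (g x) \<partial>V) = 1"
    and F_meas: "F \<in> borel_measurable (V \<Otimes>\<^sub>M \<mu>)"
    and F_eq: "\<And>x y. x \<in> space V \<Longrightarrow> y \<in> space \<mu> \<Longrightarrow> F (x,y) = g x * u x y"
    and u_nn: "\<And>x y. x \<in> space V \<Longrightarrow> y \<in> space \<mu> \<Longrightarrow> u x y \<ge> 0"
    and u_int: "\<And>x. x \<in> space V \<Longrightarrow> integrable \<mu> (u x)"
    and u_le: "\<And>x. x \<in> space V \<Longrightarrow> (\<integral>y. u x y \<partial>\<mu>) \<le> B"
    and B: "B \<ge> 0"
  shows "integrable (V \<Otimes>\<^sub>M \<mu>) F" "(\<integral>z. F z \<partial>(V \<Otimes>\<^sub>M \<mu>)) \<le> B"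
proof -
  note eq = prod_nn[OF sf g_nonneg F_meas F_eq u_nn u_int]
  have "(\<integral>\<^sup>+x. ennreal (g x) * ennreal (\<integral>y. u x y \<partial>\<mu>) \<partial>V) \<le> (\<integral>\<^sup>+x. ennreal (g x) * ennreal B \<partial>V)"
    by (intro nn_integral_mono mult_left_mono ennreal_leI u_le) auto
  also have "\<dots> = (\<integral>\<^sup>+x. ennreal (g x) \<partial>V) * ennreal B"
    by (rule nn_integral_multc) (use g_meas in auto)
  also have "\<dots> = ennreal B" using G1 by simp
  finally have le: "(\<integral>\<^sup>+z. ennreal (F z) \<partial>(V \<Otimes>\<^sub>M \<mu>)) \<le> ennreal B" using eq by simp
  have nn: "AE z in V \<Otimes>\<^sub>M \<mu>. 0 \<le> F z"
    by (intro AE_I2) (auto simp: space_pair_measure F_eq g_nonneg u_nn)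
  show "integrable (V \<Otimes>\<^sub>M \<mu>) F"
    by (rule integrableI_nonneg[OF F_meas nn]) (use le in \<open>auto simp: top_unique less_top[symmetric]\<close>)
  show "(\<integral>z. F z \<partial>(V \<Otimes>\<^sub>M \<mu>)) \<le> B"
    by (rule integral_real_bounded[OF B le])
qed

lemma prod_eq:
  fixes V :: "'a measure" and \<mu> :: "real measure"
  assumes sf: "sigma_finite_measure \<mu>"
    and g_meas: "g \<in> borel_measurable V"
    and g_nonneg: "\<forall>x\<in>space V. g x \<ge> 0"
    and G1: "(\<integral>\<^sup>+x. ennreal (g x) \<partial>V) = 1"
    and F_meas: "F \<in> borel_measurable (V \<Otimes>\<^sub>M \<mu>)"
    and F_eq: "\<And>x y. x \<in> space V \<Longrightarrow> y \<in> space \<mu> \<Longrightarrow> F (x,y) = g x * u x y"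
    and u_nn: "\<And>x y. x \<in> space V \<Longrightarrow> y \<in> space \<mu> \<Longrightarrow> u x y \<ge> 0"
    and u_int: "\<And>x. x \<in> space V \<Longrightarrow> integrable \<mu> (u x)"
    and u_eq: "\<And>x. x \<in> space V \<Longrightarrow> (\<integral>y. u x y \<partial>\<mu>) = B"
    and B: "B \<ge> 0"
  shows "(\<integral>z. F z \<partial>(V \<Otimes>\<^sub>M \<mu>)) = B"
proof -
  note eq = prod_nn[OF sf g_nonneg F_meas F_eq u_nn u_int]
  have "(\<integral>\<^sup>+x. ennreal (g x) * ennreal (\<integral>y. u x y \<partial>\<mu>) \<partial>V) = (\<integral>\<^sup>+x. ennreal (g x) * ennreal B \<partial>V)"
    by (intro nn_integral_cong) (simp add: u_eq)
  also have "\<dots> = (\<integral>\<^sup>+x. ennreal (g x) \<partial>V) * ennreal B"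
    by (rule nn_integral_multc) (use g_meas in auto)
  also have "\<dots> = ennreal B" using G1 by simp
  finally have e: "(\<integral>\<^sup>+z. ennreal (F z) \<partial>(V \<Otimes>\<^sub>M \<mu>)) = ennreal B" using eq by simp
  have nn: "AE z in V \<Otimes>\<^sub>M \<mu>. 0 \<le> F z"
    by (intro AE_I2) (auto simp: space_pair_measure F_eq g_nonneg u_nn)
  show ?thesis using integral_eq_nn_integral[OF F_meas nn] e B by simp
qed




lemma cont_bound:
  fixes f :: "real \<Rightarrow> real"
  assumes "continuous_on {lo..hi} f"
  shows "\<exists>M\<ge>0. \<forall>t\<in>{lo..hi}. \<bar>f t\<bar> \<le> M"
proof -
  have "bounded (f ` {lo..hi})"
    by (intro compact_imp_bounded compact_continuous_image assms compact_Icc)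
  then obtain M where "\<forall>t\<in>{lo..hi}. \<bar>f t\<bar> \<le> M" by (auto simp: bounded_real)
  then show ?thesis by (intro exI[of _ "max M 0"]) auto
qed

locale main = cond +
  fixes V :: "'a measure" and g :: "'a \<Rightarrow> real" and Y :: "real set" and l \<zeta> :: "real \<Rightarrow> real"
  assumes g_meas: "g \<in> borel_measurable V"
    and g_nonneg: "\<forall>x\<in>space V. g x \<ge> 0"
    and G_prob: "prob_space (density V g)"
    and mu_def: "(Y \<in> sets lborel \<and> \<mu> = restrict_space lborel Y) \<or> (countable Y \<and> \<mu> = count_space Y)"
    and J_C2: "\<forall>t. logpart \<mu> h \<kappa> differentiable at t"
              "\<forall>t. deriv (logpart \<mu> h \<kappa>) differentiable at t"
              "continuous_on UNIV (deriv (deriv (logpart \<mu> h \<kappa>)))"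
    and J'_inj: "inj (deriv (logpart \<mu> h \<kappa>))"
    and zeta_link: "\<forall>t. deriv (logpart \<mu> h \<kappa>) (\<zeta> t) = l t"
    and l_C1: "\<forall>t. l differentiable at t" "bounded (range (deriv l))"
    and zeta_C1: "\<forall>t. \<zeta> differentiable at t" "bounded (range (deriv \<zeta>))"
begin

lemma sf: "sigma_finite_measure \<mu>"
  using mu_def
  by (auto intro: sigma_finite_measure_restrict_space[OF sigma_finite_lborel]
                  sigma_finite_measure_count_space_countable)

lemma G1: "(\<integral>\<^sup>+x. ennreal (g x) \<partial>V) = 1"
proof -
  have "emeasure (density V g) (space (density V g)) = 1"
    using prob_space.emeasure_space_1[OF G_prob] .
  then have "(\<integral>\<^sup>+x. ennreal (g x) * indicator (space V) x \<partial>V) = 1"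
    using g_meas by (simp add: emeasure_density)
  moreover have "(\<integral>\<^sup>+x. ennreal (g x) * indicator (space V) x \<partial>V) = (\<integral>\<^sup>+x. ennreal (g x) \<partial>V)"
    by (intro nn_integral_cong) auto
  ultimately show ?thesis by simp
qed

lemma space_ne: "space V \<noteq> {}"
  using G1 by (auto simp: nn_integral_empty)

lemma contJ: "continuous_on UNIV JJ"
  using J_C2(1) by (meson differentiable_imp_continuous_on differentiable_at_imp_differentiable_on)
lemma contJ': "continuous_on UNIV (deriv JJ)"
  using J_C2(2) by (meson differentiable_imp_continuous_on differentiable_at_imp_differentiable_on)
lemma contZ: "continuous_on UNIV \<zeta>"
  using zeta_C1(1) by (meson differentiable_imp_continuous_on differentiable_at_imp_differentiable_on)

lemma measJ[measurable]: "JJ \<in> borel_measurable borel"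
  by (rule borel_measurable_continuous_onI[OF contJ])
lemma measZ[measurable]: "\<zeta> \<in> borel_measurable borel"
  by (rule borel_measurable_continuous_onI[OF contZ])

lemma jdens_meas:
  assumes [measurable]: "f \<in> borel_measurable V"
  shows "jdens \<mu> h \<kappa> \<zeta> g f \<in> borel_measurable (V \<Otimes>\<^sub>M \<mu>)"
  unfolding jdens_def cdens_def using h_meas kappa_meas g_meas by measurable

lemma Lc_meas2:
  assumes [measurable]: "f1 \<in> borel_measurable V" "f2 \<in> borel_measurable V"
  shows "(\<lambda>z. Lc (\<zeta> (f1 (fst z))) (\<zeta> (f2 (fst z))) (snd z)) \<in> borel_measurable (V \<Otimes>\<^sub>M \<mu>)"
  unfolding Lc_def using kappa_meas by measurable

lemma Bz: "\<exists>B\<ge>0. \<forall>t. \<bar>deriv \<zeta> t\<bar> \<le> B"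
proof -
  obtain B where "\<forall>t\<in>range (deriv \<zeta>). \<bar>t\<bar> \<le> B" using zeta_C1(2) by (auto simp: bounded_real)
  then show ?thesis by (intro exI[of _ "max B 0"]) (auto intro: max.coboundedI1)
qed

lemma Bl: "\<exists>B\<ge>0. \<forall>t. \<bar>deriv l t\<bar> \<le> B"
proof -
  obtain B where "\<forall>t\<in>range (deriv l). \<bar>t\<bar> \<le> B" using l_C1(2) by (auto simp: bounded_real)
  then show ?thesis by (intro exI[of _ "max B 0"]) (auto intro: max.coboundedI1)
qed


lemma sup_bound:
  assumes "\<forall>x\<in>space V. \<bar>f1 x - f2 x\<bar> \<le> R" "x \<in> space V"
  shows "\<bar>f1 x - f2 x\<bar> \<le> supnorm V (\<lambda>x. f1 x - f2 x)"
proof -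
  have "bdd_above ((\<lambda>x. \<bar>f1 x - f2 x\<bar>) ` space V)" using assms(1) by (auto intro: bdd_aboveI2)
  then show ?thesis unfolding supnorm_def by (rule cSUP_upper[OF assms(2)])
qed

lemma part2: "\<exists>C6>0. \<forall>f1 f2.
        f1 \<in> borel_measurable V \<longrightarrow> f2 \<in> borel_measurable V \<longrightarrow>
        bounded ((\<lambda>x. f1 x - f2 x) ` space V) \<longrightarrow>
        (hellinger (V \<Otimes>\<^sub>M \<mu>) (jdens \<mu> h \<kappa> \<zeta> g f1) (jdens \<mu> h \<kappa> \<zeta> g f2))^2
          \<le> C6 * (supnorm V (\<lambda>x. f1 x - f2 x))^2"
proof -
  obtain Bz where Bz: "Bz \<ge> 0" "\<forall>t. \<bar>deriv \<zeta> t\<bar> \<le> Bz" using Bz by blast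
  obtain BL where BL: "BL \<ge> 0" "\<forall>t. \<bar>deriv l t\<bar> \<le> BL" using Bl by blast
  have lipz: "\<bar>\<zeta> u - \<zeta> v\<bar> \<le> Bz * \<bar>u - v\<bar>" for u v by (rule lip_deriv[OF zeta_C1(1)]) (use Bz in auto)
  have lipl: "\<bar>l u - l v\<bar> \<le> BL * \<bar>u - v\<bar>" for u v by (rule lip_deriv[OF l_C1(1)]) (use BL in auto)
  define C6 where "C6 = Bz * BL / 2 + 1"
  show ?thesis
  proof (intro exI[of _ C6] conjI allI impI)
    show "C6 > 0" using mult_nonneg_nonneg[OF Bz(1) BL(1)] by (simp add: C6_def)
    fix f1 f2 :: "'a \<Rightarrow> real" assume f1[measurable]: "f1 \<in> borel_measurable V" and f2[measurable]: "f2 \<in> borel_measurable V"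
      and bd: "bounded ((\<lambda>x. f1 x - f2 x) ` space V)"
    define s where "s = supnorm V (\<lambda>x. f1 x - f2 x)"
    from bd obtain R where R: "\<forall>x\<in>space V. \<bar>f1 x - f2 x\<bar> \<le> R" by (auto simp: bounded_real)
    have sx: "\<bar>f1 x - f2 x\<bar> \<le> s" if "x \<in> space V" for x
      unfolding s_def by (rule sup_bound[OF R that])
    define P1 where "P1 = jdens \<mu> h \<kappa> \<zeta> g f1"
    define P2 where "P2 = jdens \<mu> h \<kappa> \<zeta> g f2"
    have [measurable]: "P1 \<in> borel_measurable (V \<Otimes>\<^sub>M \<mu>)" "P2 \<in> borel_measurable (V \<Otimes>\<^sub>M \<mu>)"
      unfolding P1_def P2_def by (intro jdens_meas f1 f2)+
    define I where "I = (\<integral>z. (sqrt (P1 z) - sqrt (P2 z))^2 \<partial>(V \<Otimes>\<^sub>M \<mu>))"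
    have I_le: "I \<le> Bz * BL / 2 * s^2"
      unfolding I_def
    proof (rule prod_bound(2)[OF sf g_meas g_nonneg G1, where u="\<lambda>x y. (sqrt (cd (\<zeta> (f1 x)) y) - sqrt (cd (\<zeta> (f2 x)) y))^2"])
      show "(\<lambda>z. (sqrt (P1 z) - sqrt (P2 z))^2) \<in> borel_measurable (V \<Otimes>\<^sub>M \<mu>)" by measurable
      show "(sqrt (P1 (x, y)) - sqrt (P2 (x, y)))^2 = g x * (sqrt (cd (\<zeta> (f1 x)) y) - sqrt (cd (\<zeta> (f2 x)) y))^2"
        if "x \<in> space V" for x y
        using hell_pt[of "g x"] g_nonneg that by (simp add: P1_def P2_def jdens_def)
      show "0 \<le> (sqrt (cd (\<zeta> (f1 x)) y) - sqrt (cd (\<zeta> (f2 x)) y))^2" for x y by simp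
      show "integrable \<mu> (\<lambda>y. (sqrt (cd (\<zeta> (f1 x)) y) - sqrt (cd (\<zeta> (f2 x)) y))^2)" for x
        by (rule hell_cond(1))
      show "0 \<le> Bz * BL / 2 * s^2" using Bz BL by simp
      fix x assume x: "x \<in> space V"
      define a where "a = \<zeta> (f1 x)"
      define b where "b = \<zeta> (f2 x)"
      define d where "d = \<bar>f1 x - f2 x\<bar>"
      have "(\<integral>y. (sqrt (cd a y) - sqrt (cd b y))^2 \<partial>\<mu>) \<le> 2 * ((JJ a + JJ b) / 2 - JJ ((a + b) / 2))"
        by (rule hell_cond(2))
      also have "\<dots> \<le> 2 * (\<bar>a - b\<bar> * \<bar>deriv JJ a - deriv JJ b\<bar> / 4)"
        by (rule mult_left_mono[OF D_bound[OF J_C2(1) J_C2(2) J'_inj, of a b]]) simp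
      also have "\<dots> = \<bar>a - b\<bar> * \<bar>l (f1 x) - l (f2 x)\<bar> / 2"
        using zeta_link by (simp add: a_def b_def)
      also have "\<dots> \<le> (Bz * d) * (BL * d) / 2"
        unfolding a_def b_def d_def using Bz(1) BL(1) by (intro divide_right_mono mult_mono lipz lipl) auto
      also have "\<dots> = Bz * BL / 2 * d^2" by (simp add: power2_eq_square)
      also have "\<dots> \<le> Bz * BL / 2 * s^2"
        using sx[OF x] Bz BL by (intro mult_left_mono power_mono) (auto simp: d_def)
      finally show "(\<integral>y. (sqrt (cd (\<zeta> (f1 x)) y) - sqrt (cd (\<zeta> (f2 x)) y))^2 \<partial>\<mu>) \<le> Bz * BL / 2 * s^2"
        by (simp add: a_def b_def)
    qed
    have "I \<ge> 0" unfolding I_def by (intro integral_nonneg_AE AE_I2) simp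
    then have "(hellinger (V \<Otimes>\<^sub>M \<mu>) P1 P2)^2 = I" by (simp add: hellinger_def I_def)
    also have "\<dots> \<le> C6 * s^2"
    proof -
      have "0 \<le> s^2" by simp
      then show ?thesis unfolding C6_def distrib_right using I_le by linarith
    qed
    finally show "(hellinger (V \<Otimes>\<^sub>M \<mu>) (jdens \<mu> h \<kappa> \<zeta> g f1) (jdens \<mu> h \<kappa> \<zeta> g f2))^2
          \<le> C6 * (supnorm V (\<lambda>x. f1 x - f2 x))^2" by (simp add: P1_def P2_def s_def)
  qed
qed


lemma WW_pos: "WW t \<ge> 0"
  unfolding WW_def by (intro divide_nonneg_pos add_nonneg_nonneg) auto

lemma exp_bound: "exp (E::real) - 1 \<le> \<bar>E\<bar> * exp Em" if "\<bar>E\<bar> \<le> Em"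
proof -
  have "1 - E \<le> exp (- E)" using exp_ge_add_one_self[of "-E"] by simp
  then have "exp E * (1 - E) \<le> exp E * exp (- E)" by (intro mult_left_mono) auto
  then have "exp E - 1 \<le> E * exp E" by (simp add: algebra_simps flip: exp_add)
  also have "\<dots> \<le> \<bar>E\<bar> * exp Em"
    using that by (intro mult_mono) auto
  finally show ?thesis .
qed

lemma part1:
  assumes "bounded \<Omega>"
  shows "\<exists>C4>0. \<exists>C5>0. \<forall>f1 f2.
           f1 \<in> borel_measurable V \<longrightarrow> f2 \<in> borel_measurable V \<longrightarrow>
           (\<forall>x\<in>space V. f1 x \<in> \<Omega> \<and> f2 x \<in> \<Omega>) \<longrightarrow>
           KL (V \<Otimes>\<^sub>M \<mu>) (jdens \<mu> h \<kappa> \<zeta> g f1) (jdens \<mu> h \<kappa> \<zeta> g f2)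
              \<le> C4 * (supnorm V (\<lambda>x. f1 x - f2 x))^2 \<and>
           V20 (V \<Otimes>\<^sub>M \<mu>) (jdens \<mu> h \<kappa> \<zeta> g f1) (jdens \<mu> h \<kappa> \<zeta> g f2)
              \<le> C5 * (supnorm V (\<lambda>x. f1 x - f2 x))^2"
proof -
  obtain R where R: "\<forall>w\<in>\<Omega>. \<bar>w\<bar> \<le> R" using assms by (auto simp: bounded_real)
  obtain Bz where Bz: "Bz \<ge> 0" "\<forall>t. \<bar>deriv \<zeta> t\<bar> \<le> Bz" using Bz by blast
  have lipz: "\<bar>\<zeta> u - \<zeta> v\<bar> \<le> Bz * \<bar>u - v\<bar>" for u v by (rule lip_deriv[OF zeta_C1(1)]) (use Bz in auto)
  define Rt where "Rt = \<bar>\<zeta> 0\<bar> + Bz * \<bar>R\<bar>"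
  have Rt0: "Rt \<ge> 0" using Bz(1) by (simp add: Rt_def)
  have zb: "\<bar>\<zeta> w\<bar> \<le> Rt" if "w \<in> \<Omega>" for w
  proof -
    have "\<bar>\<zeta> w - \<zeta> 0\<bar> \<le> Bz * \<bar>w\<bar>" using lipz[of w 0] by simp
    moreover have "\<bar>\<zeta> w\<bar> \<le> \<bar>\<zeta> 0\<bar> + \<bar>\<zeta> w - \<zeta> 0\<bar>" using abs_triangle_ineq[of "\<zeta> 0" "\<zeta> w - \<zeta> 0"] by simp
    moreover have "Bz * \<bar>w\<bar> \<le> Bz * \<bar>R\<bar>" using R that Bz(1) by (intro mult_left_mono) auto
    ultimately show ?thesis unfolding Rt_def by linarith
  qed
  define T where "T = {-3*Rt..3*Rt}"
  have cJ: "continuous_on S f \<Longrightarrow> continuous_on S (\<lambda>x. JJ (f x))" for S and f :: "real \<Rightarrow> real"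
    by (rule continuous_on_compose2[OF contJ]) auto
  have contW: "continuous_on UNIV WW"
    unfolding WW_def[abs_def] by (intro continuous_intros cJ) auto
  obtain M1 where M1: "M1 \<ge> 0" "\<forall>t\<in>T. \<bar>deriv JJ t\<bar> \<le> M1"
    unfolding T_def using cont_bound[OF continuous_on_subset[OF contJ']] by blast
  obtain M2 where M2: "M2 \<ge> 0" "\<forall>t\<in>T. \<bar>deriv (deriv JJ) t\<bar> \<le> M2"
    unfolding T_def using cont_bound[OF continuous_on_subset[OF J_C2(3)]] by blast
  obtain MW where MW: "MW \<ge> 0" "\<forall>t\<in>T. \<bar>WW t\<bar> \<le> MW"
    unfolding T_def using cont_bound[OF continuous_on_subset[OF contW]] by blast
  define Emax where "Emax = 2 * M2 * (2 * Rt)^2"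
  define Kc where "Kc = Bz * (MW + M1)"
  define C4 where "C4 = 2 * M2 * Bz^2 * exp Emax + 1"
  define C5 where "C5 = 3 * (4 * Bz^2 * MW + M1^2 * Bz^2 + Kc^2) + 1"
  have "0 \<le> 2 * M2 * Bz^2 * exp Emax" using M2(1) by simp
  then have C4pos: "C4 > 0" unfolding C4_def by linarith
  have "0 \<le> 3 * (4 * Bz^2 * MW + M1^2 * Bz^2 + Kc^2)" using MW(1) by simp
  then have C5pos: "C5 > 0" unfolding C5_def by linarith
  show ?thesis
  proof (rule exI[of _ C4], rule conjI, rule C4pos, rule exI[of _ C5], rule conjI, rule C5pos, intro allI impI conjI)
    fix f1 f2 :: "'a \<Rightarrow> real"
    assume f1[measurable]: "f1 \<in> borel_measurable V" and f2[measurable]: "f2 \<in> borel_measurable V"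
      and inO: "\<forall>x\<in>space V. f1 x \<in> \<Omega> \<and> f2 x \<in> \<Omega>"
    define s where "s = supnorm V (\<lambda>x. f1 x - f2 x)"
    have R2: "\<forall>x\<in>space V. \<bar>f1 x - f2 x\<bar> \<le> 2 * R"
    proof
      fix x assume "x \<in> space V"
      then have "\<bar>f1 x\<bar> \<le> R" "\<bar>f2 x\<bar> \<le> R" using R inO by auto
      then show "\<bar>f1 x - f2 x\<bar> \<le> 2 * R" by linarith
    qed
    have sx: "\<bar>f1 x - f2 x\<bar> \<le> \<bar>s\<bar>" if "x \<in> space V" for x
      unfolding s_def using sup_bound[OF R2 that] by linarith
    define a where "a x = \<zeta> (f1 x)" for x
    define b where "b x = \<zeta> (f2 x)" for x
    have ab: "\<bar>a x\<bar> \<le> Rt" "\<bar>b x\<bar> \<le> Rt" if "x \<in> space V" for x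
      using zb inO that by (auto simp: a_def b_def)
    have dab: "\<bar>a x - b x\<bar> \<le> Bz * \<bar>s\<bar>" if "x \<in> space V" for x
      using lipz[of "f1 x" "f2 x"] mult_left_mono[OF sx[OF that] Bz(1)] by (simp add: a_def b_def)
    have dab2: "(a x - b x)^2 \<le> Bz^2 * s^2" if "x \<in> space V" for x
    proof -
      have "\<bar>a x - b x\<bar>^2 \<le> (Bz * \<bar>s\<bar>)^2" by (intro power_mono dab that) auto
      then show ?thesis by (simp add: power_mult_distrib)
    qed
    have Jab: "\<bar>JJ (a x) - JJ (b x)\<bar> \<le> M1 * \<bar>a x - b x\<bar>" if x: "x \<in> space V" for x
    proof (rule lip_deriv[OF J_C2(1)])
      fix t assume t: "min (a x) (b x) \<le> t" "t \<le> max (a x) (b x)"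
      have "t \<in> T" using t ab[OF x] Rt0 unfolding T_def by (auto simp: abs_le_iff min_def max_def split: if_splits)
      then show "\<bar>deriv JJ t\<bar> \<le> M1" using M1(2) by blast
    qed
    have Wab: "WW (a x) \<le> MW" if x: "x \<in> space V" for x
    proof -
      have "a x \<in> T" using ab[OF x] Rt0 unfolding T_def by (auto simp: abs_le_iff)
      then show ?thesis using MW(2) by fastforce
    qed
    have Eab: "exp (JJ (2 * a x - b x) - 2 * JJ (a x) + JJ (b x)) \<le> 1 + C4 * s^2" if x: "x \<in> space V" for x
    proof -
      define E where "E = JJ (2 * a x - b x) - 2 * JJ (a x) + JJ (b x)"
      have d2R: "\<bar>a x - b x\<bar> \<le> 2 * Rt" using ab[OF x] by linarith
      have E1: "\<bar>E\<bar> \<le> 2 * M2 * (a x - b x)^2" unfolding E_def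
      proof (rule E_bound[OF J_C2(1) J_C2(2)])
        fix t assume t: "a x - \<bar>a x - b x\<bar> \<le> t" "t \<le> a x + \<bar>a x - b x\<bar>"
        have "t \<in> T" using t ab[OF x] d2R Rt0 unfolding T_def by (auto simp: abs_le_iff)
        then show "\<bar>deriv (deriv JJ) t\<bar> \<le> M2" using M2(2) by blast
      qed
      have "(a x - b x)^2 \<le> (2 * Rt)^2"
        using power_mono[OF d2R, of 2] by simp
      then have "\<bar>E\<bar> \<le> Emax" unfolding Emax_def using E1 M2(1)
        by (meson mult_left_mono order_trans zero_le_mult_iff zero_le_numeral)
      then have "exp E - 1 \<le> \<bar>E\<bar> * exp Emax" by (rule exp_bound)
      also have "\<dots> \<le> (2 * M2 * (Bz^2 * s^2)) * exp Emax"
      proof -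
        have "2 * M2 * (a x - b x)^2 \<le> 2 * M2 * (Bz^2 * s^2)"
          using M2(1) by (intro mult_left_mono[OF dab2[OF x]]) simp
        then have "\<bar>E\<bar> \<le> 2 * M2 * (Bz^2 * s^2)" using E1 by linarith
        then show ?thesis by (rule mult_right_mono) simp
      qed
      also have "\<dots> \<le> C4 * s^2"
      proof -
        have "0 \<le> s^2" by simp
        then show ?thesis unfolding C4_def by (simp add: algebra_simps)
      qed
      finally show ?thesis by (simp add: E_def)
    qed
    define P1 where "P1 = jdens \<mu> h \<kappa> \<zeta> g f1"
    define P2 where "P2 = jdens \<mu> h \<kappa> \<zeta> g f2"
    have [measurable]: "P1 \<in> borel_measurable (V \<Otimes>\<^sub>M \<mu>)" "P2 \<in> borel_measurable (V \<Otimes>\<^sub>M \<mu>)"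
      unfolding P1_def P2_def by (intro jdens_meas f1 f2)+
    have P1_eq: "P1 (x, y) = cd (a x) y * g x" for x y by (simp add: P1_def jdens_def a_def)
    have P2_eq: "P2 (x, y) = cd (b x) y * g x" for x y by (simp add: P2_def jdens_def b_def)
    have cda_meas[measurable]: "(\<lambda>z. cd (a (fst z)) (snd z)) \<in> borel_measurable (V \<Otimes>\<^sub>M \<mu>)"
      unfolding a_def cdens_def using h_meas kappa_meas by measurable
    have Lc_m[measurable]: "(\<lambda>z. Lc (a (fst z)) (b (fst z)) (snd z)) \<in> borel_measurable (V \<Otimes>\<^sub>M \<mu>)"
      unfolding a_def b_def by (rule Lc_meas2[OF f1 f2])
    define K where "K = KL (V \<Otimes>\<^sub>M \<mu>) P1 P2"
    define G where "G z = g (fst z) * (cd (a (fst z)) (snd z) * Lc (a (fst z)) (b (fst z)) (snd z))" for z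
    have gf_meas: "(\<lambda>z. g (fst z)) \<in> borel_measurable (V \<Otimes>\<^sub>M \<mu>)"
      by (rule measurable_compose[OF measurable_fst g_meas])
    have G_meas[measurable]: "G \<in> borel_measurable (V \<Otimes>\<^sub>M \<mu>)" unfolding G_def
      by (intro borel_measurable_times gf_meas cda_meas Lc_m)
    have PG: "P1 z * ln (P1 z / P2 z) = G z" if zs: "z \<in> space (V \<Otimes>\<^sub>M \<mu>)" for z
    proof -
      obtain x y where z: "z = (x, y)" "x \<in> space V" using zs by (cases z) (auto simp: space_pair_measure)
      show ?thesis using kl_pt[of "g x" "a x" y "b x"] g_nonneg z
        by (simp add: P1_eq P2_eq G_def)
    qed
    have KG: "K = (\<integral>z. G z \<partial>(V \<Otimes>\<^sub>M \<mu>))"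
      unfolding K_def KL_def by (rule Bochner_Integration.integral_cong[OF refl]) (rule PG)
    have H0m: "(\<lambda>z. g (fst z) * cd (a (fst z)) (snd z)) \<in> borel_measurable (V \<Otimes>\<^sub>M \<mu>)"
      by (intro borel_measurable_times gf_meas cda_meas)
    have H1m: "(\<lambda>z. g (fst z) * (cd (a (fst z)) (snd z) * exp (Lc (a (fst z)) (b (fst z)) (snd z)))) \<in> borel_measurable (V \<Otimes>\<^sub>M \<mu>)"
      by (intro borel_measurable_times gf_meas cda_meas measurable_compose[OF Lc_m borel_measurable_exp])
    have intH0: "integrable (V \<Otimes>\<^sub>M \<mu>) (\<lambda>z. g (fst z) * cd (a (fst z)) (snd z))"
      by (rule prod_bound(1)[OF sf g_meas g_nonneg G1, where u="\<lambda>x y. cd (a x) y" and B=1])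
        (auto simp: cd_nonneg cd_int cd_integral H0m)
    have intH0_eq: "(\<integral>z. g (fst z) * cd (a (fst z)) (snd z) \<partial>(V \<Otimes>\<^sub>M \<mu>)) = 1"
      by (rule prod_eq[OF sf g_meas g_nonneg G1, where u="\<lambda>x y. cd (a x) y" and B=1])
        (auto simp: cd_nonneg cd_int cd_integral H0m)
    have H1: "integrable (V \<Otimes>\<^sub>M \<mu>) (\<lambda>z. g (fst z) * (cd (a (fst z)) (snd z) * exp (Lc (a (fst z)) (b (fst z)) (snd z))))"
       "(\<integral>z. g (fst z) * (cd (a (fst z)) (snd z) * exp (Lc (a (fst z)) (b (fst z)) (snd z))) \<partial>(V \<Otimes>\<^sub>M \<mu>)) \<le> 1 + C4 * s^2"
    proof -
      have B0: "0 \<le> 1 + C4 * s^2" using C4pos by simp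
      note pb = prod_bound[OF sf g_meas g_nonneg G1 H1m, where u="\<lambda>x y. cd (a x) y * exp (Lc (a x) (b x) y)" and B="1 + C4 * s^2"]
      have p1: "g (fst (x, y)) * (cd (a (fst (x, y))) (snd (x, y)) * exp (Lc (a (fst (x, y))) (b (fst (x, y))) (snd (x, y)))) =
          g x * (cd (a x) y * exp (Lc (a x) (b x) y))" for x y by simp
      have p2: "0 \<le> cd (a x) y * exp (Lc (a x) (b x) y)" for x y by (simp add: cd_nonneg)
      have p3: "integrable \<mu> (\<lambda>y. cd (a x) y * exp (Lc (a x) (b x) y))" for x by (rule kl_cond(1))
      have p4: "(\<integral>y. cd (a x) y * exp (Lc (a x) (b x) y) \<partial>\<mu>) \<le> 1 + C4 * s^2" if "x \<in> space V" for x
        unfolding kl_cond(2) by (rule Eab[OF that])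
      show "integrable (V \<Otimes>\<^sub>M \<mu>) (\<lambda>z. g (fst z) * (cd (a (fst z)) (snd z) * exp (Lc (a (fst z)) (b (fst z)) (snd z))))"
        by (rule pb(1)[OF p1 p2 p3 p4 B0])
      show "(\<integral>z. g (fst z) * (cd (a (fst z)) (snd z) * exp (Lc (a (fst z)) (b (fst z)) (snd z))) \<partial>(V \<Otimes>\<^sub>M \<mu>)) \<le> 1 + C4 * s^2"
        by (rule pb(2)[OF p1 p2 p3 p4 B0])
    qed
    have KL_le: "K \<le> C4 * s^2"
    proof (cases "integrable (V \<Otimes>\<^sub>M \<mu>) G")
      case True
      have "K \<le> (\<integral>z. g (fst z) * (cd (a (fst z)) (snd z) * exp (Lc (a (fst z)) (b (fst z)) (snd z)))
                   - g (fst z) * cd (a (fst z)) (snd z) \<partial>(V \<Otimes>\<^sub>M \<mu>))"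
        unfolding KG
      proof (rule integral_mono[OF True Bochner_Integration.integrable_diff[OF H1(1) intH0]])
        fix z assume "z \<in> space (V \<Otimes>\<^sub>M \<mu>)"
        then have gz: "g (fst z) \<ge> 0" using g_nonneg by (auto simp: space_pair_measure)
        let ?c = "cd (a (fst z)) (snd z)" and ?L = "Lc (a (fst z)) (b (fst z)) (snd z)"
        have "g (fst z) * ?c * (?L + 1) \<le> g (fst z) * ?c * exp ?L"
          by (intro mult_left_mono exp_ge_add_one_self[of ?L, unfolded add.commute[of 1]])
             (use gz cd_nonneg in auto)
        then show "G z \<le> g (fst z) * (?c * exp ?L) - g (fst z) * ?c"
          by (simp add: G_def algebra_simps)
      qed
      also have "\<dots> \<le> C4 * s^2"
        using H1(2) intH0_eq by (simp add: Bochner_Integration.integral_diff[OF H1(1) intH0])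
      finally show ?thesis .
    next
      case False
      then have "K = 0" unfolding KG by (simp add: not_integrable_integral_eq)
      moreover have "0 \<le> C4 * s^2" unfolding C4_def using M2(1) by simp
      ultimately show ?thesis by simp
    qed
    have K_abs: "\<bar>K\<bar> \<le> Kc * \<bar>s\<bar>"
    proof -
      have "\<bar>K\<bar> \<le> (\<integral>z. \<bar>G z\<bar> \<partial>(V \<Otimes>\<^sub>M \<mu>))" unfolding KG by (rule integral_abs_bound)
      also have "\<dots> \<le> Kc * \<bar>s\<bar>"
      proof (rule prod_bound(2)[OF sf g_meas g_nonneg G1, where u="\<lambda>x y. cd (a x) y * \<bar>Lc (a x) (b x) y\<bar>"])
        show "(\<lambda>z. \<bar>G z\<bar>) \<in> borel_measurable (V \<Otimes>\<^sub>M \<mu>)" by (intro borel_measurable_abs G_meas)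
        show "\<bar>G (x, y)\<bar> = g x * (cd (a x) y * \<bar>Lc (a x) (b x) y\<bar>)" if "x \<in> space V" for x y
          using g_nonneg that cd_nonneg by (simp add: G_def abs_mult)
        show "0 \<le> cd (a x) y * \<bar>Lc (a x) (b x) y\<bar>" for x y by (simp add: cd_nonneg)
        show "integrable \<mu> (\<lambda>y. cd (a x) y * \<bar>Lc (a x) (b x) y\<bar>)" for x by (rule abs_cond(1))
        show "0 \<le> Kc * \<bar>s\<bar>" unfolding Kc_def using Bz(1) MW(1) M1(1) by simp
        fix x assume x: "x \<in> space V"
        have "(\<integral>y. cd (a x) y * \<bar>Lc (a x) (b x) y\<bar> \<partial>\<mu>) \<le> \<bar>a x - b x\<bar> * WW (a x) + \<bar>JJ (a x) - JJ (b x)\<bar>"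
          by (rule abs_cond(2))
        also have "\<dots> \<le> (Bz * \<bar>s\<bar>) * MW + M1 * (Bz * \<bar>s\<bar>)"
          using dab[OF x] Wab[OF x] Jab[OF x] WW_pos[of "a x"] M1(1)
          by (intro add_mono mult_mono order_trans[OF _ mult_left_mono[OF dab[OF x] M1(1)]]) auto
        also have "\<dots> = Kc * \<bar>s\<bar>" by (simp add: Kc_def algebra_simps)
        finally show "(\<integral>y. cd (a x) y * \<bar>Lc (a x) (b x) y\<bar> \<partial>\<mu>) \<le> Kc * \<bar>s\<bar>" .
      qed
      finally show ?thesis .
    qed
    have K2: "K^2 \<le> Kc^2 * s^2"
    proof -
      have "\<bar>K\<bar>^2 \<le> (Kc * \<bar>s\<bar>)^2" by (intro power_mono K_abs) auto
      then show ?thesis by (simp add: power_mult_distrib)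
    qed
    have V_le: "V20 (V \<Otimes>\<^sub>M \<mu>) P1 P2 \<le> C5 * s^2"
    proof -
      have "V20 (V \<Otimes>\<^sub>M \<mu>) P1 P2 = (\<integral>z. g (fst z) * (cd (a (fst z)) (snd z) * \<bar>Lc (a (fst z)) (b (fst z)) (snd z) - K\<bar>^2) \<partial>(V \<Otimes>\<^sub>M \<mu>))"
        unfolding V20_def K_def[symmetric]
      proof (intro Bochner_Integration.integral_cong refl)
        fix z assume "z \<in> space (V \<Otimes>\<^sub>M \<mu>)"
        then obtain x y where z: "z = (x, y)" "x \<in> space V" by (cases z) (auto simp: space_pair_measure)
        show "P1 z * \<bar>ln (P1 z / P2 z) - K\<bar>^2 = g (fst z) * (cd (a (fst z)) (snd z) * \<bar>Lc (a (fst z)) (b (fst z)) (snd z) - K\<bar>^2)"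
          using v_pt[of "g x" "a x" y "b x" K] g_nonneg z by (simp add: P1_eq P2_eq)
      qed
      also have "\<dots> \<le> 3 * (4 * (Bz^2 * s^2) * MW + M1^2 * (Bz^2 * s^2) + Kc^2 * s^2)"
      proof (rule prod_bound(2)[OF sf g_meas g_nonneg G1, where u="\<lambda>x y. cd (a x) y * \<bar>Lc (a x) (b x) y - K\<bar>^2"])
        show "(\<lambda>z. g (fst z) * (cd (a (fst z)) (snd z) * \<bar>Lc (a (fst z)) (b (fst z)) (snd z) - K\<bar>^2)) \<in> borel_measurable (V \<Otimes>\<^sub>M \<mu>)"
          by (intro borel_measurable_times gf_meas cda_meas borel_measurable_power borel_measurable_abs borel_measurable_diff Lc_m borel_measurable_const)
        show "g (fst (x, y)) * (cd (a (fst (x, y))) (snd (x, y)) * \<bar>Lc (a (fst (x, y))) (b (fst (x, y))) (snd (x, y)) - K\<bar>^2) =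
              g x * (cd (a x) y * \<bar>Lc (a x) (b x) y - K\<bar>^2)" for x y by simp
        show "0 \<le> cd (a x) y * \<bar>Lc (a x) (b x) y - K\<bar>^2" for x y by (simp add: cd_nonneg)
        show "integrable \<mu> (\<lambda>y. cd (a x) y * \<bar>Lc (a x) (b x) y - K\<bar>^2)" for x by (rule sq_cond(1))
        show "0 \<le> 3 * (4 * (Bz^2 * s^2) * MW + M1^2 * (Bz^2 * s^2) + Kc^2 * s^2)" using MW(1) by simp
        fix x assume x: "x \<in> space V"
        have "(\<integral>y. cd (a x) y * \<bar>Lc (a x) (b x) y - K\<bar>^2 \<partial>\<mu>) \<le> 3 * (4 * (a x - b x)^2 * WW (a x) + (JJ (a x) - JJ (b x))^2 + K^2)"
          by (rule sq_cond(2))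
        also have "\<dots> \<le> 3 * (4 * (Bz^2 * s^2) * MW + M1^2 * (Bz^2 * s^2) + Kc^2 * s^2)"
        proof -
          have f1: "(a x - b x)^2 * WW (a x) \<le> (Bz^2 * s^2) * MW"
            using dab2[OF x] Wab[OF x] WW_pos[of "a x"] by (intro mult_mono) auto
          have A: "4 * (a x - b x)^2 * WW (a x) \<le> 4 * (Bz^2 * s^2) * MW"
            using mult_left_mono[OF f1, of 4] by (simp add: mult.assoc)
          have B: "(JJ (a x) - JJ (b x))^2 \<le> M1^2 * (Bz^2 * s^2)"
          proof -
            have "\<bar>JJ (a x) - JJ (b x)\<bar>^2 \<le> (M1 * \<bar>a x - b x\<bar>)^2" by (intro power_mono Jab x) auto
            also have "\<dots> = M1^2 * (a x - b x)^2" by (simp add: power_mult_distrib)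
            also have "\<dots> \<le> M1^2 * (Bz^2 * s^2)" by (intro mult_left_mono dab2 x) auto
            finally show ?thesis by simp
          qed
          show ?thesis by (rule mult_left_mono[OF add_mono[OF add_mono[OF A B] K2]]) simp
        qed
        finally show "(\<integral>y. cd (a x) y * \<bar>Lc (a x) (b x) y - K\<bar>^2 \<partial>\<mu>) \<le> 3 * (4 * (Bz^2 * s^2) * MW + M1^2 * (Bz^2 * s^2) + Kc^2 * s^2)" .
      qed
      also have "\<dots> \<le> C5 * s^2"
      proof -
        have "0 \<le> s^2" by simp
        then show ?thesis unfolding C5_def by (simp add: algebra_simps)
      qed
      finally show ?thesis .
    qed
    show "KL (V \<Otimes>\<^sub>M \<mu>) (jdens \<mu> h \<kappa> \<zeta> g f1) (jdens \<mu> h \<kappa> \<zeta> g f2) \<le> C4 * (supnorm V (\<lambda>x. f1 x - f2 x))^2"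
      using KL_le by (simp add: K_def P1_def P2_def s_def)
    show "V20 (V \<Otimes>\<^sub>M \<mu>) (jdens \<mu> h \<kappa> \<zeta> g f1) (jdens \<mu> h \<kappa> \<zeta> g f2) \<le> C5 * (supnorm V (\<lambda>x. f1 x - f2 x))^2"
      using V_le by (simp add: P1_def P2_def s_def)
  qed
qed

end

theorem lemma7:
  fixes V :: "'a measure" and g :: "'a \<Rightarrow> real"
    and \<mu> :: "real measure" and Y :: "real set"
    and h \<kappa> l \<zeta> :: "real \<Rightarrow> real"
  assumes V_sf: "sigma_finite_measure V"
    and g_meas: "g \<in> borel_measurable V"
    and g_nonneg: "\<forall>x\<in>space V. g x \<ge> 0"
    and G_prob: "prob_space (density V g)"
    and mu_def: "(Y \<in> sets lborel \<and> \<mu> = restrict_space lborel Y) \<or> (countable Y \<and> \<mu> = count_space Y)"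
    and h_meas: "h \<in> borel_measurable \<mu>" and h_nonneg: "\<forall>y. h y \<ge> 0"
    and kappa_meas: "\<kappa> \<in> borel_measurable \<mu>"
    and J_finite: "\<forall>\<theta>. integrable \<mu> (\<lambda>y. h y * exp (\<theta> * \<kappa> y)) \<and> (\<integral>y. h y * exp (\<theta> * \<kappa> y) \<partial>\<mu>) > 0"
    and J_C2: "\<forall>t. logpart \<mu> h \<kappa> differentiable at t"
              "\<forall>t. deriv (logpart \<mu> h \<kappa>) differentiable at t"
              "continuous_on UNIV (deriv (deriv (logpart \<mu> h \<kappa>)))"
    and minimal: "minimal_family \<mu> h \<kappa>"
    and J'_inj: "inj (deriv (logpart \<mu> h \<kappa>))"
    and zeta_link: "\<forall>t. deriv (logpart \<mu> h \<kappa>) (\<zeta> t) = l t"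
    and l_C1: "\<forall>t. l differentiable at t" "continuous_on UNIV (deriv l)" "bounded (range (deriv l))"
    and zeta_C1: "\<forall>t. \<zeta> differentiable at t" "continuous_on UNIV (deriv \<zeta>)" "bounded (range (deriv \<zeta>))"
  shows
    "(\<forall>\<Omega> :: real set. bounded \<Omega> \<longrightarrow>
        (\<exists>C4>0. \<exists>C5>0. \<forall>f1 f2.
           f1 \<in> borel_measurable V \<longrightarrow> f2 \<in> borel_measurable V \<longrightarrow>
           (\<forall>x\<in>space V. f1 x \<in> \<Omega> \<and> f2 x \<in> \<Omega>) \<longrightarrow>
           KL (V \<Otimes>\<^sub>M \<mu>) (jdens \<mu> h \<kappa> \<zeta> g f1) (jdens \<mu> h \<kappa> \<zeta> g f2)
              \<le> C4 * (supnorm V (\<lambda>x. f1 x - f2 x))^2 \<and>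
           V20 (V \<Otimes>\<^sub>M \<mu>) (jdens \<mu> h \<kappa> \<zeta> g f1) (jdens \<mu> h \<kappa> \<zeta> g f2)
              \<le> C5 * (supnorm V (\<lambda>x. f1 x - f2 x))^2))
     \<and>
     (\<exists>C6>0. \<forall>f1 f2.
        f1 \<in> borel_measurable V \<longrightarrow> f2 \<in> borel_measurable V \<longrightarrow>
        bounded ((\<lambda>x. f1 x - f2 x) ` space V) \<longrightarrow>
        (hellinger (V \<Otimes>\<^sub>M \<mu>) (jdens \<mu> h \<kappa> \<zeta> g f1) (jdens \<mu> h \<kappa> \<zeta> g f2))^2
          \<le> C6 * (supnorm V (\<lambda>x. f1 x - f2 x))^2)"
proof -
  interpret M: main \<mu> h \<kappa> V g Y l \<zeta>
    by (rule main.intro[OF cond.intro[OF h_meas h_nonneg kappa_meas J_finite]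
          main_axioms.intro[OF g_meas g_nonneg G_prob mu_def J_C2(1) J_C2(2) J_C2(3) J'_inj zeta_link
            l_C1(1) l_C1(3) zeta_C1(1) zeta_C1(3)]])
  show ?thesis using M.part1 M.part2 by blast
qed

end
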